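(* Let $\mathcal{S}\colon\mathbb{R}^{n\times d}\to\mathbb{R}^{n\times d}$ have $(p,\delta)$-structure. Then $\mathcal{S}$ is bijective and its inverse $\mathcal{D}:=\mathcal{S}^{-1}\colon\mathbb{R}^{n\times d}\to\mathbb{R}^{n\times d}$ has $(p',\delta^{p-1})$-structure, where $p'=p/(p-1)$.
   Context: For $q\in(1,\infty)$ and $\epsilon\ge0$ let $\varphi_{q,\epsilon}(t)=\int_0^t(\epsilon+s)^{q-2}s\,\mathrm ds$; for an N-function $\psi$ and $a\ge0$, the shifted function is $\psi_a(t)=\int_0^t\psi'(a+s)\frac{s}{a+s}\mathrm ds$. A map $\mathcal{T}\colon\mathbb{R}^{n\times d}\to\mathbb{R}^{n\times d}$ has $(q,\epsilon)$-structure if it is continuous, $\mathcal{T}(\mathbf0)=\mathbf0$, and there are constants $C_0,C_1>0$ with $(\mathcal{T}(\mathsf Q)-\mathcal{T}(\mathsf P)):(\mathsf Q-\mathsf P)\ge C_0(\varphi_{q,\epsilon})_{|\mathsf Q|}(|\mathsf Q-\mathsf P|)$ and $|\mathcal{T}(\mathsf Q)-\mathcal{T}(\mathsf P)|\le C_1(\varphi_{q,\epsilon})'_{|\mathsf Q|}(|\mathsf Q-\mathsf P|)$ for all $\mathsf P,\mathsf Q\in\mathbb{R}^{n\times d}$ with $\mathsf Q\ne\mathbf0$. Here $p\in(1,\infty)$, $\delta\ge0$. *)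

theory Defs
  imports "HOL-Analysis.Analysis"
begin

definition phi_deriv :: "real \<Rightarrow> real \<Rightarrow> real \<Rightarrow> real" where
  "phi_deriv q eps s = (eps + s) powr (q - 2) * s"

definition phi :: "real \<Rightarrow> real \<Rightarrow> real \<Rightarrow> real" where
  "phi q eps t = integral {0..t} (phi_deriv q eps)"

definition shifted_deriv :: "(real \<Rightarrow> real) \<Rightarrow> real \<Rightarrow> real \<Rightarrow> real" where
  "shifted_deriv dpsi a t = dpsi (a + t) * t / (a + t)"

definition shifted :: "(real \<Rightarrow> real) \<Rightarrow> real \<Rightarrow> real \<Rightarrow> real" where
  "shifted dpsi a t = integral {0..t} (shifted_deriv dpsi a)"

text \<open>(q,eps)-structure of a map on n x d real matrices (Frobenius norm / inner product).\<close>
definition has_structure ::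
  "real \<Rightarrow> real \<Rightarrow> (real^'d^'n \<Rightarrow> real^'d^'n) \<Rightarrow> bool" where
  "has_structure q eps T \<longleftrightarrow>
     continuous_on UNIV T \<and> T 0 = 0 \<and>
     (\<exists>C0>0. \<exists>C1>0. \<forall>P Q. Q \<noteq> 0 \<longrightarrow>
        (T Q - T P) \<bullet> (Q - P) \<ge> C0 * shifted (phi_deriv q eps) (norm Q) (norm (Q - P)) \<and>
        norm (T Q - T P) \<le> C1 * shifted_deriv (phi_deriv q eps) (norm Q) (norm (Q - P)))"

end

theory Submission
  imports Defs
begin

lemma g_split:
  fixes k s q :: real assumes "k + s > 0"
  shows "(k+s) powr (q-2) * s = (k+s) powr (q-1) * (s/(k+s))"
proof -
  have "(k+s) powr (q-1) = (k+s) powr (q-2) * (k+s)"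
    using assms powr_add[of "k+s" "q-2" 1] by simp
  thus ?thesis using assms by (simp add: field_simps)
qed

lemma g_mono:
  fixes k s t q :: real
  assumes "k > 0" "q > 1" "0 \<le> s" "s \<le> t"
  shows "(k+s) powr (q-2) * s \<le> (k+t) powr (q-2) * t"
proof -
  have a: "(k+s) powr (q-1) \<le> (k+t) powr (q-1)"
    using assms by (intro powr_mono2) auto
  have b: "s/(k+s) \<le> t/(k+t)"
    using assms by (simp add: field_simps mult_right_mono)
  have "(k+s) powr (q-1) * (s/(k+s)) \<le> (k+t) powr (q-1) * (t/(k+t))"
    using a b assms by (intro mult_mono) auto
  thus ?thesis using assms g_split[of k s q] g_split[of k t q] by simp
qed

lemma g_cont: "k > 0 \<Longrightarrow> continuous_on {0..t} (\<lambda>s::real. (k+s) powr (q-2) * s)"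
  by (intro continuous_intros) auto

lemma int_upper:
  fixes k t q :: real
  assumes "k > 0" "q > 1" "0 \<le> t"
  shows "integral {0..t} (\<lambda>s. (k+s) powr (q-2) * s) \<le> (k+t) powr (q-2) * t^2"
proof -
  have "integral {0..t} (\<lambda>s. (k+s) powr (q-2) * s) \<le> integral {0..t} (\<lambda>s. (k+t) powr (q-2) * t)"
    using assms g_mono[of k q] by (intro integral_le integrable_continuous_interval g_cont) auto
  also have "\<dots> = (k+t) powr (q-2) * t^2" using assms by (simp add: power2_eq_square)
  finally show ?thesis .
qed

lemma int_lower:
  fixes k t q :: real
  assumes "k > 0" "q > 1" "0 \<le> t"
  shows "integral {0..t} (\<lambda>s. (k+s) powr (q-2) * s) \<ge> min 1 (2 powr (2-q)) / 4 * (k+t) powr (q-2) * t^2"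
proof -
  let ?g = "\<lambda>s. (k+s) powr (q-2) * s"
  have "integral {t/2..t} ?g \<le> integral {0..t} ?g"
    using assms by (intro integral_subset_le integrable_continuous_interval g_cont continuous_on_subset[OF g_cont]) auto
  moreover have "integral {t/2..t} (\<lambda>s. ?g (t/2)) \<le> integral {t/2..t} ?g"
    using assms g_mono[of k q "t/2"] 
    by (intro integral_le integrable_continuous_interval continuous_on_subset[OF g_cont]) auto
  moreover have "integral {t/2..t} (\<lambda>s. ?g (t/2)) = (k+t/2) powr (q-2) * t^2/4"
    using assms by (simp add: power2_eq_square)
  moreover have "(k+t/2) powr (q-2) \<ge> min 1 (2 powr (2-q)) * (k+t) powr (q-2)"
  proof (cases "q \<ge> 2")
    case True
    have "(k+t/2) powr (q-2) \<ge> ((k+t)/2) powr (q-2)"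
      using assms True by (intro powr_mono2) auto
    also have "((k+t)/2) powr (q-2) = 2 powr (2-q) * (k+t) powr (q-2)"
      using assms by (simp add: powr_divide powr_minus_divide[symmetric] powr_diff)
    finally have "2 powr (2-q) * (k+t) powr (q-2) \<le> (k+t/2) powr (q-2)" .
    moreover have "min 1 (2 powr (2-q)) * (k+t) powr (q-2) \<le> 2 powr (2-q) * (k+t) powr (q-2)"
      by (intro mult_right_mono) auto
    ultimately show ?thesis by linarith
  next
    case False
    have "(k+t/2) powr (q-2) \<ge> (k+t) powr (q-2)"
      using assms False by (intro powr_mono2') auto
    moreover have "min 1 (2 powr (2-q)) * (k+t) powr (q-2) \<le> 1 * (k+t) powr (q-2)"
      by (intro mult_right_mono) auto
    ultimately show ?thesis by linarith
  qed
  moreover have "min 1 (2 powr (2-q)) * (k+t) powr (q-2) * t^2/4 \<le> (k+t/2) powr (q-2) * t^2/4"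
    by (intro divide_right_mono mult_right_mono calculation(4)) auto
  ultimately show ?thesis by linarith
qed


lemma E_bounds:
  fixes p \<delta> k0 k1 a t a' t' :: real
  assumes p: "1<p" "0\<le>\<delta>" "0<k0" "0<k1" "0<a" "0\<le>t"
  and h3: "t' \<le> k1*(\<delta>+a+t) powr (p-2)*t" and h4: "t' \<ge> k0*(\<delta>+a+t) powr (p-2)*t"
  and h5: "k0*(\<delta>+2*a) powr (p-2)*a \<le> a'" and h6: "a' \<le> k1*(\<delta>+2*a) powr (p-2)*a"
  shows "min ((1/3) powr (p-1)) (min (k0*min ((1/3) powr (p-2)) (2 powr (p-2))/3) (k0/3)) * (\<delta>+a+t) powr (p-1)
           \<le> \<delta> powr (p-1) + a' + t'"
    and "\<delta> powr (p-1) + a' + t' \<le> (1 + k1 * 2 powr (p-1) + k1) * (\<delta>+a+t) powr (p-1)"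
proof -
  define K where "K = \<delta>+a+t"
  have K: "K > 0" using p by (simp add: K_def)
  have uK: "K powr (p-1) = K powr (p-2) * K" using K powr_add[of K "p-2" 1] by simp
  have u0: "K powr (p-2) \<ge> 0" by simp
  have t'0: "t' \<ge> 0" using h4 p u0 K_def by (smt (verit) mult_nonneg_nonneg)
  define b where "b = \<delta>+2*a"
  have b: "b > 0" using p by (simp add: b_def)
  have ub: "b powr (p-1) = b powr (p-2) * b" using b powr_add[of b "p-2" 1] by simp
  have a'0: "a' \<ge> 0" using h5 p b_def by (smt (verit) mult_nonneg_nonneg powr_ge_zero)
  show "\<delta> powr (p-1) + a' + t' \<le> (1 + k1 * 2 powr (p-1) + k1) * (\<delta>+a+t) powr (p-1)"
  proof -
    have 1: "\<delta> powr (p-1) \<le> K powr (p-1)" using p by (intro powr_mono2) (auto simp: K_def)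
    have "a' \<le> k1 * (b powr (p-2) * a)" using h6 b_def by simp
    also have "\<dots> \<le> k1 * (b powr (p-2) * b)" using p b_def by (intro mult_left_mono) auto
    also have "\<dots> = k1 * b powr (p-1)" using ub by simp
    also have "\<dots> \<le> k1 * (2*K) powr (p-1)" using p b_def K_def by (intro mult_left_mono powr_mono2) auto
    also have "\<dots> = k1 * 2 powr (p-1) * K powr (p-1)" using K by (simp add: powr_mult)
    finally have 2: "a' \<le> k1 * 2 powr (p-1) * K powr (p-1)" .
    have "t' \<le> k1 * (K powr (p-2) * t)" using h3 K_def by simp
    also have "\<dots> \<le> k1 * (K powr (p-2) * K)" using p K_def by (intro mult_left_mono) auto
    finally have 3: "t' \<le> k1 * K powr (p-1)" using uK by simp
    show ?thesis using 1 2 3 unfolding K_def[symmetric] by (simp add: algebra_simps)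
  qed
  define mn1 where "mn1 = min ((1/3) powr (p-2)) (2 powr (p-2))"
  have "K \<le> 3*\<delta> \<or> K \<le> 3*a \<or> K \<le> 3*t" using K_def by linarith
  moreover
  { assume c: "K \<le> 3*\<delta>"
    have "(1/3) powr (p-1) * K powr (p-1) = ((1/3)*K) powr (p-1)" using K by (intro powr_mult[symmetric])
    also have "\<dots> \<le> \<delta> powr (p-1)" using c p K by (intro powr_mono2) auto
    finally have "(1/3) powr (p-1) * K powr (p-1) \<le> \<delta> powr (p-1) + a' + t'" using a'0 t'0 by linarith }
  moreover
  { assume c: "K \<le> 3*a"
    have "mn1 * K powr (p-2) \<le> b powr (p-2)"
    proof (cases "p \<ge> 2")
      case True
      have "mn1 * K powr (p-2) \<le> (1/3) powr (p-2) * K powr (p-2)" unfolding mn1_def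
        by (intro mult_right_mono) auto
      also have "\<dots> = ((1/3)*K) powr (p-2)" using K by (intro powr_mult[symmetric])
      also have "\<dots> \<le> b powr (p-2)" using c p K True b_def by (intro powr_mono2) auto
      finally show ?thesis .
    next
      case False
      have "mn1 * K powr (p-2) \<le> 2 powr (p-2) * K powr (p-2)" unfolding mn1_def
        by (intro mult_right_mono) auto
      also have "\<dots> = (2*K) powr (p-2)" using K by (intro powr_mult[symmetric])
      also have "\<dots> \<le> b powr (p-2)" using c p K False b_def K_def by (intro powr_mono2') auto
      finally show ?thesis .
    qed
    then have "k0*(mn1 * K powr (p-2)) * ((1/3)*K) \<le> k0*b powr (p-2)*a"
      using c p K by (intro mult_mono mult_left_mono) (auto simp: mn1_def)
    then have "k0*mn1/3 * K powr (p-1) \<le> a'" using h5 uK b_def by (simp add: algebra_simps)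
    then have "k0*mn1/3 * K powr (p-1) \<le> \<delta> powr (p-1) + a' + t'" using t'0 powr_ge_zero[of \<delta> "p-1"] by linarith }
  moreover
  { assume c: "K \<le> 3*t"
    have "k0*K powr (p-2)*((1/3)*K) \<le> k0*K powr (p-2)*t"
      using c p by (intro mult_left_mono) auto
    then have "k0/3 * K powr (p-1) \<le> t'" using h4 uK K_def by (simp add: algebra_simps)
    then have "k0/3 * K powr (p-1) \<le> \<delta> powr (p-1) + a' + t'" using a'0 powr_ge_zero[of \<delta> "p-1"] by linarith }
  ultimately show "min ((1/3) powr (p-1)) (min (k0*min ((1/3) powr (p-2)) (2 powr (p-2))/3) (k0/3)) * (\<delta>+a+t) powr (p-1)
           \<le> \<delta> powr (p-1) + a' + t'"
    unfolding K_def[symmetric] mn1_def[symmetric]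
    by (smt (verit) mult_right_mono powr_ge_zero min.cobounded1 min.cobounded2)
qed


lemma pow_bounds:
  fixes E K m M r p :: real
  assumes "K > 0" "m > 0" "m * K powr (p-1) \<le> E" "E \<le> M * K powr (p-1)" "(p-1)*r = 2-p"
  shows "E powr r \<le> max (m powr r) (M powr r) * K powr (2-p)"
    and "E powr r \<ge> min (m powr r) (M powr r) * K powr (2-p)"
proof -
  define l where "l = E / K powr (p-1)"
  have Kp: "K powr (p-1) > 0" using assms by simp
  have El: "E = l * K powr (p-1)" using Kp by (simp add: l_def)
  have lm: "m \<le> l" using assms Kp by (simp add: l_def field_simps)
  have lM: "l \<le> M" using assms Kp by (simp add: l_def field_simps)
  have l0: "l > 0" using lm assms by linarith
  have Er: "E powr r = l powr r * K powr (2-p)"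
    using El l0 Kp assms by (simp add: powr_mult powr_powr)
  have "l powr r \<le> max (m powr r) (M powr r) \<and> l powr r \<ge> min (m powr r) (M powr r)"
  proof (cases "r \<ge> 0")
    case True
    have "m powr r \<le> l powr r" "l powr r \<le> M powr r"
      using True lm lM assms l0 by (auto intro!: powr_mono2)
    then show ?thesis by linarith
  next
    case False
    have "l powr r \<le> m powr r" "M powr r \<le> l powr r"
      using False lm lM assms l0 by (auto intro!: powr_mono2')
    then show ?thesis by linarith
  qed
  then show "E powr r \<le> max (m powr r) (M powr r) * K powr (2-p)"
    and "E powr r \<ge> min (m powr r) (M powr r) * K powr (2-p)"
    using Er by (auto intro!: mult_right_mono)
qed


lemma key_real:
  fixes p \<delta> k0 k1 :: real
  assumes p: "1<p" "0\<le>\<delta>" "0<k0" "0<k1"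
  shows "\<exists>c0>0. \<exists>c1>0. \<forall>a t a' t' X. 0<a \<longrightarrow> 0\<le>t \<longrightarrow>
    X \<ge> k0*(\<delta>+a+t) powr (p-2)*t^2 \<longrightarrow> t' \<le> k1*(\<delta>+a+t) powr (p-2)*t \<longrightarrow>
    t' \<ge> k0*(\<delta>+a+t) powr (p-2)*t \<longrightarrow>
    k0*(\<delta>+2*a) powr (p-2)*a \<le> a' \<longrightarrow> a' \<le> k1*(\<delta>+2*a) powr (p-2)*a \<longrightarrow>
    X \<ge> c0 * (\<delta> powr (p-1) + a' + t') powr (p/(p-1)-2) * t'^2 \<and>
    t \<le> c1 * (\<delta> powr (p-1) + a' + t') powr (p/(p-1)-2) * t'"
proof -
  define m where "m = min ((1/3) powr (p-1)) (min (k0*min ((1/3) powr (p-2)) (2 powr (p-2))/3) (k0/3))"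
  define M where "M = 1 + k1 * 2 powr (p-1) + k1"
  define r where "r = p/(p-1)-2"
  have r: "(p-1)*r = 2-p" using p by (simp add: r_def field_simps)
  have m0: "m > 0" using p by (simp add: m_def)
  have M0: "M > 0" using p by (simp add: M_def add_pos_nonneg)
  define mx where "mx = max (m powr r) (M powr r)"
  define mn where "mn = min (m powr r) (M powr r)"
  have mx0: "mx > 0" using m0 M0 unfolding mx_def by (simp add: less_max_iff_disj)
  have mn0: "mn > 0" using m0 M0 by (simp add: mn_def)
  define c0 where "c0 = k0 / (mx * k1^2)"
  define c1 where "c1 = 1 / (mn * k0)"
  have c00: "c0 > 0" using p mx0 by (simp add: c0_def)
  have c10: "c1 > 0" using p mn0 by (simp add: c1_def)
  have main: "X \<ge> c0 * (\<delta> powr (p-1) + a' + t') powr r * t'^2 \<and>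
    t \<le> c1 * (\<delta> powr (p-1) + a' + t') powr r * t'"
    if a: "0<a" and t: "0\<le>t" and h1: "X \<ge> k0*(\<delta>+a+t) powr (p-2)*t^2"
      and h3: "t' \<le> k1*(\<delta>+a+t) powr (p-2)*t" and h4: "t' \<ge> k0*(\<delta>+a+t) powr (p-2)*t"
      and h5: "k0*(\<delta>+2*a) powr (p-2)*a \<le> a'" and h6: "a' \<le> k1*(\<delta>+2*a) powr (p-2)*a"
    for a t a' t' X
  proof -
    define K where "K = \<delta>+a+t"
    define E where "E = \<delta> powr (p-1) + a' + t'"
    have K: "K > 0" using p a t by (simp add: K_def)
    have EB: "m * K powr (p-1) \<le> E" "E \<le> M * K powr (p-1)"
      using E_bounds[OF p a t h3 h4 h5 h6] unfolding m_def M_def K_def E_def by auto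
    have PB: "E powr r \<le> mx * K powr (2-p)" "E powr r \<ge> mn * K powr (2-p)"
      using pow_bounds[OF K m0 EB r] unfolding mx_def mn_def by auto
    have KK: "K powr (2-p) * K powr (p-2) = 1" using K by (simp add: powr_add[symmetric])
    have u0: "K powr (p-2) \<ge> 0" by simp
    have t'0: "t' \<ge> 0" using h4 p u0 t K_def by (smt (verit) mult_nonneg_nonneg)
    have "t'^2 \<le> (k1*K powr (p-2)*t)^2" using t'0 h3 K_def by (intro power_mono) auto
    then have "E powr r * t'^2 \<le> (mx * K powr (2-p)) * (k1*K powr (p-2)*t)^2"
      using PB mx0 by (intro mult_mono) auto
    also have "\<dots> = mx * k1^2 * K powr (p-2) * t^2 * (K powr (2-p) * K powr (p-2))"
      by (simp add: power2_eq_square algebra_simps)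
    also have "\<dots> = mx * k1^2 * (K powr (p-2) * t^2)" using KK by simp
    finally have "c0 * (E powr r * t'^2) \<le> c0 * (mx * k1^2 * (K powr (p-2) * t^2))"
      using c00 by (intro mult_left_mono) auto
    also have "\<dots> = k0 * K powr (p-2) * t^2" using mx0 p by (simp add: c0_def)
    finally have 1: "X \<ge> c0 * E powr r * t'^2" using h1 K_def by (simp add: mult.assoc)
    have "mn * K powr (2-p) * (k0*K powr (p-2)*t) \<le> E powr r * t'"
      using PB h4 K_def mn0 p t by (intro mult_mono) auto
    moreover have "mn * K powr (2-p) * (k0*K powr (p-2)*t) = mn*k0*t * (K powr (2-p) * K powr (p-2))"
      by (simp add: algebra_simps)
    ultimately have "mn*k0*t \<le> E powr r * t'" using KK by simp
    then have "c1 * (mn*k0*t) \<le> c1 * (E powr r * t')" using c10 by (intro mult_left_mono) auto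
    then have 2: "t \<le> c1 * E powr r * t'" using mn0 p by (simp add: c1_def mult.assoc)
    show ?thesis using 1 2 unfolding E_def by simp
  qed
  show ?thesis
    apply (rule exI[of _ c0], rule conjI[OF c00])
    apply (rule exI[of _ c1], rule conjI[OF c10])
    using main unfolding r_def by blast
qed


lemma sd_eq: "a + t > 0 \<Longrightarrow> shifted_deriv (phi_deriv q e) a t = (e+a+t) powr (q-2) * t"
  unfolding shifted_deriv_def phi_deriv_def by (simp add: add.assoc)

lemma sh_eq: "a > 0 \<Longrightarrow> shifted (phi_deriv q e) a t = integral {0..t} (\<lambda>s. (e+a+s) powr (q-2) * s)"
  unfolding shifted_def by (rule integral_cong) (simp add: sd_eq)

theorem lemma5p1:
  fixes S :: "real^'d^'n \<Rightarrow> real^'d^'n" and p \<delta> :: real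
  assumes "1 < p" and "0 \<le> \<delta>" and "has_structure p \<delta> S"
  shows "bij S \<and> has_structure (p / (p - 1)) (\<delta> powr (p - 1)) (inv S)"
proof -
  have p: "1 < p" and d: "0 \<le> \<delta>" using assms by auto
  have contS: "continuous_on UNIV S" and S0: "S 0 = 0" using assms(3) unfolding has_structure_def by auto
  obtain C0 C1 where C0: "C0 > 0" and C1: "C1 > 0" and H: "\<And>P Q. Q \<noteq> 0 \<Longrightarrow>
        (S Q - S P) \<bullet> (Q - P) \<ge> C0 * shifted (phi_deriv p \<delta>) (norm Q) (norm (Q - P)) \<and>
        norm (S Q - S P) \<le> C1 * shifted_deriv (phi_deriv p \<delta>) (norm Q) (norm (Q - P))"
    using assms(3) unfolding has_structure_def by blast
  define k0 where "k0 = C0 * (min 1 (2 powr (2-p)) / 4)"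
  have k0: "k0 > 0" using C0 by (simp add: k0_def)
  have F1: "(S Q - S P) \<bullet> (Q - P) \<ge> k0 * (\<delta> + norm Q + norm (Q-P)) powr (p-2) * (norm (Q-P))^2"
    and F2: "norm (S Q - S P) \<le> C1 * (\<delta> + norm Q + norm (Q-P)) powr (p-2) * norm (Q-P)"
    if Q: "Q \<noteq> 0" for P Q
  proof -
    have a: "norm Q > 0" using Q by simp
    have "C0 * (min 1 (2 powr (2-p)) / 4 * (\<delta> + norm Q + norm (Q-P)) powr (p-2) * (norm (Q-P))^2)
        \<le> C0 * shifted (phi_deriv p \<delta>) (norm Q) (norm (Q - P))"
      unfolding sh_eq[OF a] using int_lower[of "\<delta> + norm Q" p "norm (Q-P)"] a d p C0
      by (intro mult_left_mono) auto
    then show "(S Q - S P) \<bullet> (Q - P) \<ge> k0 * (\<delta> + norm Q + norm (Q-P)) powr (p-2) * (norm (Q-P))^2"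
      using H[OF Q, of P] by (simp add: k0_def mult.assoc)
    have "norm Q + norm (Q - P) > 0" using a by (simp add: add_pos_nonneg)
    then show "norm (S Q - S P) \<le> C1 * (\<delta> + norm Q + norm (Q-P)) powr (p-2) * norm (Q-P)"
      using H[OF Q, of P] by (simp add: sd_eq mult.assoc)
  qed
  have F3: "norm (S Q - S P) \<ge> k0 * (\<delta> + norm Q + norm (Q-P)) powr (p-2) * norm (Q-P)"
    if Q: "Q \<noteq> 0" for P Q
  proof (cases "norm (Q-P) = 0")
    case True then show ?thesis by simp
  next
    case False
    then have t: "norm (Q-P) > 0" by simp
    have "k0 * (\<delta> + norm Q + norm (Q-P)) powr (p-2) * norm (Q-P) * norm (Q-P)
         \<le> norm (S Q - S P) * norm (Q-P)"
      using F1[OF Q, of P] norm_cauchy_schwarz[of "S Q - S P" "Q - P"]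
      by (simp add: power2_eq_square mult.assoc)
    then show ?thesis using t by simp
  qed
  have G: "k0*(\<delta>+2*norm Q) powr (p-2)*norm Q \<le> norm (S Q)"
     "norm (S Q) \<le> C1*(\<delta>+2*norm Q) powr (p-2)*norm Q" if Q: "Q \<noteq> 0" for Q
  proof -
    have a2: "\<delta> + norm Q + norm (Q - 0) = \<delta> + 2 * norm Q" by simp
    show "norm (S Q) \<le> C1*(\<delta>+2*norm Q) powr (p-2)*norm Q"
      using F2[OF Q, of 0] unfolding a2 S0 by simp
    show "k0*(\<delta>+2*norm Q) powr (p-2)*norm Q \<le> norm (S Q)"
      using F3[OF Q, of 0] unfolding a2 S0 by simp
  qed
  have inj: "inj S"
  proof (rule injI, rule ccontr)
    have *: False if Q: "Q \<noteq> 0" and e: "S P = S Q" and ne: "P \<noteq> Q" for P Q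
    proof -
      have t: "norm (Q-P) > 0" using ne by simp
      have "\<delta> + norm Q + norm (Q-P) > 0" using Q d by (simp add: add_pos_nonneg add_nonneg_pos)
      then have K: "(\<delta> + norm Q + norm (Q-P)) powr (p-2) > 0" by simp
      have "0 < k0 * (\<delta> + norm Q + norm (Q-P)) powr (p-2) * (norm (Q-P))^2"
        using k0 K t by simp
      also have "\<dots> \<le> 0" using F1[OF Q, of P] e by simp
      finally show False by simp
    qed
    fix x y assume "S x = S y" "x \<noteq> y"
    then show False using *[of y x] *[of x y] by (cases "y = 0") auto
  qed
  have coer: "\<exists>R. \<forall>Q. norm Q > R \<longrightarrow> norm (S Q) > B" for B
  proof -
    define B' where "B' = max B 1"
    define mm where "mm = min 1 (3 powr (p-2))"
    have mm: "mm > 0" by (simp add: mm_def)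
    define R where "R = max \<delta> ((B'/(k0*mm)) powr (1/(p-1)))"
    have "norm (S Q) > B" if QR: "norm Q > R" for Q
    proof -
      define a where "a = norm Q"
      have a: "a > 0" "a \<ge> \<delta>" using QR d by (auto simp: R_def a_def)
      have Q: "Q \<noteq> 0" using a by (auto simp: a_def)
      have b1: "mm * a powr (p-2) \<le> (\<delta> + 2*a) powr (p-2)"
      proof (cases "p \<ge> 2")
        case True
        have "mm * a powr (p-2) \<le> 1 * a powr (p-2)" unfolding mm_def by (intro mult_right_mono) auto
        also have "\<dots> \<le> (\<delta> + 2*a) powr (p-2)" using True a d by (auto intro!: powr_mono2)
        finally show ?thesis .
      next
        case False
        have "mm * a powr (p-2) \<le> 3 powr (p-2) * a powr (p-2)" unfolding mm_def by (intro mult_right_mono) auto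
        also have "\<dots> = (3*a) powr (p-2)" using a by (intro powr_mult[symmetric])
        also have "\<dots> \<le> (\<delta> + 2*a) powr (p-2)" using False a d by (intro powr_mono2') auto
        finally show ?thesis .
      qed
      have ap: "a powr (p-1) = a powr (p-2) * a" using a powr_add[of a "p-2" 1] by simp
      have "B' = ((B'/(k0*mm)) powr (1/(p-1))) powr (p-1) * (k0*mm)"
        using p k0 mm by (simp add: powr_powr B'_def)
      also have "\<dots> < a powr (p-1) * (k0*mm)"
        using QR p k0 mm by (intro mult_strict_right_mono powr_less_mono2) (auto simp: R_def a_def)
      also have "\<dots> = k0 * (mm * a powr (p-2)) * a" using ap by (simp add: algebra_simps)
      also have "\<dots> \<le> k0 * (\<delta> + 2*a) powr (p-2) * a"
        using b1 k0 a by (intro mult_right_mono mult_left_mono) auto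
      also have "\<dots> \<le> norm (S Q)" using G(1)[OF Q] by (simp add: a_def)
      finally show ?thesis unfolding B'_def by linarith
    qed
    then show ?thesis by blast
  qed
  have opn: "open (range S)" using invariance_of_domain[OF contS open_UNIV] inj by simp
  have cls: "closed (range S)"
  proof -
    have "closure (range S) \<subseteq> range S"
    proof
      fix y assume y: "y \<in> closure (range S)"
      obtain R where R: "\<And>Q. norm Q > R \<Longrightarrow> norm (S Q) > norm y + 1" using coer by blast
      have sub: "ball y 1 \<inter> range S \<subseteq> S ` cball 0 R"
      proof
        fix z assume "z \<in> ball y 1 \<inter> range S"
        then obtain Q where z: "z = S Q" "dist y (S Q) < 1" by auto
        have "norm (S Q) \<le> norm y + 1" using z(2) norm_triangle_ineq2[of "S Q" y]
          by (simp add: dist_norm norm_minus_commute)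
        then have "norm Q \<le> R" using R[of Q] by linarith
        then show "z \<in> S ` cball 0 R" using z by auto
      qed
      have cc: "closed (S ` cball 0 R)"
        by (intro compact_imp_closed compact_continuous_image continuous_on_subset[OF contS]) auto
      have "y \<in> ball y 1 \<inter> closure (range S)" using y by simp
      also have "\<dots> \<subseteq> closure (ball y 1 \<inter> range S)" by (rule open_Int_closure_subset) simp
      also have "\<dots> \<subseteq> closure (S ` cball 0 R)" using sub by (rule closure_mono)
      also have "\<dots> = S ` cball 0 R" using cc by simp
      finally show "y \<in> range S" by auto
    qed
    then show ?thesis using closure_subset_eq by blast
  qed
  have surj: "surj S" using clopen[of "range S"] opn cls by auto
  have bij: "bij S" using inj surj by (simp add: bij_def)
  define D where "D = inv S"
  have SD: "S (D y) = y" for y using surj unfolding D_def by (simp add: surj_f_inv_f)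
  have DS: "D (S x) = x" for x using inj unfolding D_def by simp
  have contD: "continuous_on UNIV D"
    using continuous_on_inverse_open[OF open_UNIV contS, of D] DS surj by simp
  have D0: "D 0 = 0" using DS[of 0] S0 by simp
  obtain c0 c1 where c0: "c0 > 0" and c1: "c1 > 0" and KR: "\<forall>a t a' t' X. 0<a \<longrightarrow> 0\<le>t \<longrightarrow>
    X \<ge> k0*(\<delta>+a+t) powr (p-2)*t^2 \<longrightarrow> t' \<le> C1*(\<delta>+a+t) powr (p-2)*t \<longrightarrow>
    t' \<ge> k0*(\<delta>+a+t) powr (p-2)*t \<longrightarrow>
    k0*(\<delta>+2*a) powr (p-2)*a \<le> a' \<longrightarrow> a' \<le> C1*(\<delta>+2*a) powr (p-2)*a \<longrightarrow>
    X \<ge> c0 * (\<delta> powr (p-1) + a' + t') powr (p/(p-1)-2) * t'^2 \<and>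
    t \<le> c1 * (\<delta> powr (p-1) + a' + t') powr (p/(p-1)-2) * t'"
    using key_real[OF p d k0 C1] by blast
  have str: "(D Q' - D P') \<bullet> (Q' - P') \<ge> c0 * shifted (phi_deriv (p/(p-1)) (\<delta> powr (p-1))) (norm Q') (norm (Q' - P')) \<and>
        norm (D Q' - D P') \<le> c1 * shifted_deriv (phi_deriv (p/(p-1)) (\<delta> powr (p-1))) (norm Q') (norm (Q' - P'))"
    if Q': "Q' \<noteq> 0" for P' Q'
  proof -
    define Q P where "Q = D Q'" and "P = D P'"
    have QQ: "S Q = Q'" "S P = P'" by (simp_all add: Q_def P_def SD)
    have Q: "Q \<noteq> 0" using Q' QQ S0 by auto
    have a: "norm Q > 0" using Q by simp
    note A1 = G(2)[OF Q] and A2 = G(1)[OF Q]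
    have kr: "(S Q - S P) \<bullet> (Q - P) \<ge> c0 * (\<delta> powr (p-1) + norm (S Q) + norm (S Q - S P)) powr (p/(p-1)-2) * (norm (S Q - S P))^2 \<and>
      norm (Q - P) \<le> c1 * (\<delta> powr (p-1) + norm (S Q) + norm (S Q - S P)) powr (p/(p-1)-2) * norm (S Q - S P)"
      using KR[rule_format, of "norm Q" "norm (Q-P)" "(S Q - S P) \<bullet> (Q-P)" "norm (S Q - S P)" "norm (S Q)",
        OF a norm_ge_zero F1[OF Q] F2[OF Q] F3[OF Q] A2 A1] .
    have a': "norm Q' > 0" using Q' by simp
    have q: "p/(p-1) > 1" using p by simp
    have e0: "\<delta> powr (p-1) \<ge> 0" by simp
    have kpos: "\<delta> powr (p-1) + norm Q' > 0" using e0 a' by linarith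
    have "shifted (phi_deriv (p/(p-1)) (\<delta> powr (p-1))) (norm Q') (norm (Q' - P'))
       \<le> (\<delta> powr (p-1) + norm Q' + norm (Q' - P')) powr (p/(p-1)-2) * (norm (Q' - P'))^2"
      unfolding sh_eq[OF a'] by (rule int_upper[OF kpos q norm_ge_zero])
    then have "c0 * shifted (phi_deriv (p/(p-1)) (\<delta> powr (p-1))) (norm Q') (norm (Q' - P'))
       \<le> c0 * ((\<delta> powr (p-1) + norm Q' + norm (Q' - P')) powr (p/(p-1)-2) * (norm (Q' - P'))^2)"
      using c0 by (intro mult_left_mono) auto
    also have "\<dots> \<le> (S Q - S P) \<bullet> (Q - P)" using kr unfolding QQ mult.assoc by (rule conjunct1)
    also have "\<dots> = (D Q' - D P') \<bullet> (Q' - P')" unfolding Q_def P_def SD by (rule inner_commute)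
    finally have 1: "c0 * shifted (phi_deriv (p/(p-1)) (\<delta> powr (p-1))) (norm Q') (norm (Q' - P'))
       \<le> (D Q' - D P') \<bullet> (Q' - P')" .
    have "norm Q' + norm (Q' - P') > 0" using a' by (simp add: add_pos_nonneg)
    have 2: "norm (D Q' - D P') \<le> c1 * shifted_deriv (phi_deriv (p/(p-1)) (\<delta> powr (p-1))) (norm Q') (norm (Q' - P'))"
      using kr unfolding QQ Q_def[symmetric] P_def[symmetric] sd_eq[OF \<open>norm Q' + norm (Q' - P') > 0\<close>] mult.assoc
      by (rule conjunct2)
    show ?thesis using 1 2 by (rule conjI)
  qed
  have "has_structure (p / (p - 1)) (\<delta> powr (p - 1)) D"
  proof -
    have allstr: "\<forall>P Q. Q \<noteq> 0 \<longrightarrow>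
        (D Q - D P) \<bullet> (Q - P) \<ge> c0 * shifted (phi_deriv (p/(p-1)) (\<delta> powr (p-1))) (norm Q) (norm (Q - P)) \<and>
        norm (D Q - D P) \<le> c1 * shifted_deriv (phi_deriv (p/(p-1)) (\<delta> powr (p-1))) (norm Q) (norm (Q - P))"
      using str by blast
    show ?thesis unfolding has_structure_def using contD D0 c0 c1 allstr by blast
  qed
  then show ?thesis using bij unfolding D_def by (rule conjI[rotated])
qed

end
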